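(* Let $(b_n)_{n\ge0}$ be a sequence with $b_n\in\{0,1\}$ for all $n$, and let $G(X)=\sum_{n=0}^\infty b_nX^n$. Then: (a) $(b_n)$ is eventually periodic if and only if $G(X)\in\mathbb{Q}(X)$; moreover, in this case there exist $P(X)\in\mathbb{Q}[X]$ and an integer $d\ge1$ such that $G(X)=\frac{P(X)}{1-X^d}$. (b) $(b_n)$ is not eventually periodic if and only if $G(X)$ is transcendental over $\mathbb{Q}(X)$.
   Context: A sequence $(s_n)_{n\ge0}$ is eventually periodic if there exist integers $N\ge0$ and $d\ge1$ such that $s_{n+d}=s_n$ for all $n\ge N$. Power series are regarded as elements of the field of formal Laurent series $\mathbb{C}((X))\supseteq\mathbb{Q}(X)$, and algebraicity/transcendence over $\mathbb{Q}(X)$ refers to this extension. *)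

theory Defs
  imports Complex_Main "HOL-Computational_Algebra.Formal_Laurent_Series" "HOL-Computational_Algebra.Polynomial_FPS"
begin

definition eventually_periodic :: "(nat \<Rightarrow> 'a) \<Rightarrow> bool" where
  "eventually_periodic s \<longleftrightarrow> (\<exists>N d. d \<ge> 1 \<and> (\<forall>n\<ge>N. s (n + d) = s n))"

definition poly_to_fls :: "rat poly \<Rightarrow> complex fls" where
  "poly_to_fls p = fps_to_fls (fps_of_poly (map_poly of_rat p))"

definition QX :: "complex fls set" where
  "QX = {poly_to_fls p / poly_to_fls q | p q. q \<noteq> 0}"

definition algebraic_over_QX :: "complex fls \<Rightarrow> bool" where
  "algebraic_over_QX f \<longleftrightarrow>
     (\<exists>(n::nat) (c::nat \<Rightarrow> complex fls). (\<forall>i\<le>n. c i \<in> QX) \<and> (\<exists>i\<le>n. c i \<noteq> 0)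
        \<and> (\<Sum>i\<le>n. c i * f ^ i) = 0)"

definition transcendental_over_QX :: "complex fls \<Rightarrow> bool" where
  "transcendental_over_QX f \<longleftrightarrow> \<not> algebraic_over_QX f"

definition gen_series :: "(nat \<Rightarrow> nat) \<Rightarrow> complex fls" where
  "gen_series b = fps_to_fls (Abs_fps (\<lambda>n. of_nat (b n)))"

end

theory Submission
  imports Defs "HOL-Analysis.FPS_Convergence"
begin


lemma roots_orth:
  fixes N n m :: nat
  assumes "N > 0" "n < N" "m < N"
  defines "\<omega> \<equiv> cis (2 * pi / real N)"
  shows "(\<Sum>k<N. (\<omega> ^ n * cnj \<omega> ^ m) ^ k) = (if n = m then of_nat N else 0)"
proof (cases "n = m")
  case True
  have "\<omega> ^ m * cnj \<omega> ^ m = 1"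
    by (simp add: \<omega>_def cis_cnj cis_mult flip: power_mult_distrib)
  with True show ?thesis by simp
next
  case False
  define x where "x = cis (2 * pi * (real_of_int (int n - int m)) / real N)"
  have xe: "\<omega> ^ n * cnj \<omega> ^ m = x"
  proof -
    have "\<omega> ^ n * cnj \<omega> ^ m = cis (real n * (2*pi/N)) * cis (- (real m * (2*pi/N)))"
    proof -
      have 1: "\<omega> ^ n = cis (real n * (2*pi/N))" unfolding \<omega>_def by (rule Complex.DeMoivre)
      have 2: "cnj \<omega> ^ m = cis (- (real m * (2*pi/N)))" unfolding \<omega>_def cis_cnj Complex.DeMoivre by simp
      show ?thesis by (simp only: 1 2)
    qed
    also have "\<dots> = cis (real n * (2*pi/N) - real m * (2*pi/N))" by (simp add: cis_mult)
    also have "real n * (2*pi/N) - real m * (2*pi/N) = 2 * pi * (real_of_int (int n - int m)) / real N"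
      using assms(1) by (simp add: field_simps)
    finally show ?thesis by (simp add: x_def)
  qed
  have "x ^ N = cis (2 * pi * (real_of_int (int n - int m)))"
    using assms by (simp add: x_def Complex.DeMoivre)
  also have "\<dots> = 1" by (intro cis_multiple_2pi) auto
  finally have xN: "x ^ N = 1" .
  have "x \<noteq> 1"
  proof
    assume "x = 1"
    then have "cos (2 * pi * (real_of_int (int n - int m)) / real N) = 1"
      by (simp add: x_def complex_eq_iff)
    then obtain k :: int where k: "2 * pi * (real_of_int (int n - int m)) / real N = of_int k * (2 * pi)"
      by (auto simp: cos_one_2pi_int)
    then have "2*pi*real_of_int (int n - int m) = 2*pi*(of_int k * real N)"
      using assms by (simp add: field_simps)
    then have "real_of_int (int n - int m) = of_int k * real N"
      by (simp add: pi_neq_zero)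
    then have e: "int n - int m = k * int N"
      by (metis of_int_eq_iff of_int_mult of_int_of_nat_eq)
    show False
    proof (cases "k = 0")
      case True then show False using e False by simp
    next
      case False
      then have "\<bar>k * int N\<bar> \<ge> int N" using assms
        by (simp add: abs_mult)
      then show False using e assms by linarith
    qed
  qed
  have "(\<Sum>k<N. x ^ k) = (x ^ N - 1) / (x - 1)"
    using \<open>x \<noteq> 1\<close> by (rule geometric_sum)
  with xN False xe show ?thesis by simp
qed

lemma dft_parseval:
  fixes a :: "nat \<Rightarrow> complex" and N :: nat
  assumes "N > 0"
  shows "(\<Sum>k<N. (cmod (\<Sum>n<N. a n * cis (2*pi/real N)^(k*n)))^2) = real N * (\<Sum>n<N. (cmod (a n))^2)"
proof -
  define \<omega> where "\<omega> = cis (2*pi/real N)"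
  have e: "(\<omega>^n * cnj \<omega>^m)^k = \<omega>^(k*n) * cnj \<omega>^(k*m)" for k n m
    by (simp add: power_mult_distrib power_mult[symmetric] mult.commute)
  have "complex_of_real (\<Sum>k<N. (cmod (\<Sum>n<N. a n * \<omega>^(k*n)))^2)
      = (\<Sum>k<N. (\<Sum>n<N. a n * \<omega>^(k*n)) * cnj (\<Sum>m<N. a m * \<omega>^(k*m)))"
    unfolding of_real_sum complex_norm_square by simp
  also have "\<dots> = (\<Sum>k<N. \<Sum>n<N. \<Sum>m<N. a n * cnj (a m) * (\<omega>^n * cnj \<omega>^m)^k)"
    by (intro sum.cong refl) (simp add: sum_product e mult_ac)
  also have "\<dots> = (\<Sum>n<N. \<Sum>m<N. a n * cnj (a m) * (\<Sum>k<N. (\<omega>^n * cnj \<omega>^m)^k))"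
    by (subst sum.swap, rule sum.cong[OF refl], subst sum.swap, simp add: sum_distrib_left)
  also have "\<dots> = (\<Sum>n<N. a n * cnj (a n) * of_nat N)"
  proof (intro sum.cong refl)
    fix n assume n: "n \<in> {..<N}"
    have "(\<Sum>m<N. a n * cnj (a m) * (\<Sum>k<N. (\<omega>^n * cnj \<omega>^m)^k))
        = (\<Sum>m<N. if n = m then a n * cnj (a n) * of_nat N else 0)"
      using n by (intro sum.cong refl) (auto simp: \<omega>_def roots_orth[OF assms])
    also have "\<dots> = a n * cnj (a n) * of_nat N" using n by simp
    finally show "(\<Sum>m<N. a n * cnj (a m) * (\<Sum>k<N. (\<omega>^n * cnj \<omega>^m)^k)) = a n * cnj (a n) * of_nat N" .
  qed
  also have "\<dots> = complex_of_real (real N * (\<Sum>n<N. (cmod (a n))^2))"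
    unfolding of_real_mult of_real_sum complex_norm_square by (simp add: sum_distrib_left mult_ac)
  finally show ?thesis unfolding \<omega>_def of_real_eq_iff .
qed

lemma bounded_powser_finite:
  fixes c :: "nat \<Rightarrow> complex"
  assumes fin: "finite (range c)"
  and bnd: "\<And>z. cmod z < 1 \<Longrightarrow> cmod (\<Sum>n. c n * z^n) \<le> M"
  shows "finite {n. c n \<noteq> 0}"
proof (rule ccontr)
  assume inf: "infinite {n. c n \<noteq> 0}"
  define C where "C = Max (norm ` range c)"
  have Cb: "norm (c n) \<le> C" for n unfolding C_def using fin by (intro Max_ge) auto
  have C0: "C \<ge> 0" using Cb[of 0] norm_ge_zero order_trans by blast
  define V where "V = norm ` (range c - {0})"
  obtain n1 where n1: "c n1 \<noteq> 0" using inf by (metis (mono_tags, lifting) empty_Collect_eq finite.emptyI)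
  have Vne: "V \<noteq> {}" using n1 unfolding V_def by blast
  have Vfin: "finite V" using fin unfolding V_def by auto
  define \<delta> where "\<delta> = Min V"
  have \<delta>pos: "\<delta> > 0" unfolding \<delta>_def using Vne Vfin by (subst Min_gr_iff) (auto simp: V_def)
  have \<delta>le: "\<delta> \<le> norm (c n)" if "c n \<noteq> 0" for n
    unfolding \<delta>_def using Vfin that by (intro Min_le) (auto simp: V_def)
  have "cmod (\<Sum>n. c n * 0^n) \<le> M" by (rule bnd) simp
  then have M0: "M \<ge> 0" by (meson norm_ge_zero order_trans)
  define m0 :: nat where "m0 = nat (ceiling (2*(M+1)^2/\<delta>^2)) + 1"
  have "real m0 > 2*(M+1)^2/\<delta>^2" unfolding m0_def of_nat_add of_nat_1
    using real_nat_ceiling_ge[of "2*(M+1)^2/\<delta>^2"] by linarith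
  then have m0: "real m0 * \<delta>^2 / 2 > (M+1)^2" using \<delta>pos by (simp add: field_simps)
  obtain T where T: "finite T" "card T = m0" "T \<subseteq> {n. c n \<noteq> 0}"
    using infinite_arbitrarily_large[OF inf] by blast
  define K where "K = Suc (Max (insert 0 T))"
  have TK: "T \<subseteq> {..<K}" using T(1) unfolding K_def by (auto simp: less_Suc_eq_le)
  define r :: real where "r = 1 - 1/(4*real K + 4)"
  have r0: "0 < r" and r1: "r < 1" unfolding r_def by (auto simp: field_simps)
  have b1: "1 + real (2*K) * (- 1/(4*real K + 4)) \<le> (1 + (- 1/(4*real K + 4)))^(2*K)"
    by (rule Bernoulli_inequality) (auto simp: field_simps)
  have re: "r = 1 + (- 1/(4*real K + 4))" by (simp add: r_def)
  have b2: "1 + real (2*K) * (- 1/(4*real K + 4)) \<ge> 1/2" by (simp add: field_simps)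
  have rK: "r^(2*K) \<ge> 1/2" unfolding re using b1 b2 by linarith
  have "(\<lambda>n. r^n) \<longlonglongrightarrow> 0" using r0 r1 by (intro LIMSEQ_power_zero) simp
  moreover have "(1-r)/(C+1) > 0" using r1 C0 by simp
  ultimately have "eventually (\<lambda>n. r^n < (1-r)/(C+1)) sequentially" by (rule order_tendstoD(2))
  then obtain N0 where N0: "\<And>n. n \<ge> N0 \<Longrightarrow> r^n < (1-r)/(C+1)" by (auto simp: eventually_sequentially)
  define N where "N = max N0 K + 1"
  have N0': "N \<ge> N0" "N \<ge> K" "N > 0" unfolding N_def by auto
  have "r^N < (1-r)/(C+1)" using N0 N0'(1) by blast
  then have "(C+1) * r^N < 1 - r" using C0 by (simp add: field_simps)
  moreover have "C * r^N \<le> (C+1) * r^N" using r0 by simp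
  ultimately have tail: "C * r^N / (1 - r) \<le> 1" using r1 by (simp add: field_simps)
  define \<omega> where "\<omega> = cis (2*pi/real N)"
  have pk: "cmod (\<Sum>n<N. (c n * complex_of_real r^n) * \<omega>^(k*n)) \<le> M + 1" for k
  proof -
    define z where "z = complex_of_real r * \<omega>^k"
    have nz: "cmod z = r" using r0 by (simp add: z_def norm_mult norm_power \<omega>_def)
    have nb: "norm (c n * z^n) \<le> C * r^n" for n
      using Cb[of n] nz r0 by (simp add: norm_mult norm_power mult_right_mono)
    have sg: "summable (\<lambda>n. C * r^n)" using r0 r1 by (intro summable_mult summable_geometric) simp
    have sn: "summable (\<lambda>n. norm (c n * z^n))"
      by (rule summable_comparison_test[OF _ sg]) (use nb in auto)
    have s: "summable (\<lambda>n. c n * z^n)" using sn by (rule summable_norm_cancel)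
    have split: "(\<Sum>n. c n * z^n) = (\<Sum>n. c (n+N) * z^(n+N)) + (\<Sum>n<N. c n * z^n)"
      using s by (rule suminf_split_initial_segment)
    have sn': "summable (\<lambda>n. norm (c (n+N) * z^(n+N)))"
      using summable_ignore_initial_segment[OF sn, of N] by simp
    have sg': "summable (\<lambda>n. C * r^(n+N))"
      using summable_ignore_initial_segment[OF sg, of N] by simp
    have "cmod (\<Sum>n. c (n+N) * z^(n+N)) \<le> (\<Sum>n. norm (c (n+N) * z^(n+N)))"
      using sn' by (rule summable_norm)
    also have "\<dots> \<le> (\<Sum>n. C * r^(n+N))" using sn' sg' nb by (intro suminf_le) auto
    also have "(\<Sum>n. C * r^(n+N)) = (\<Sum>n. (C * r^N) * r^n)" by (simp add: power_add mult_ac)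
    also have "\<dots> = C * r^N * (\<Sum>n. r^n)" using r0 r1 by (intro suminf_mult summable_geometric) simp
    also have "\<dots> = C * r^N / (1 - r)" using r0 r1 by (subst suminf_geometric) auto
    finally have tb: "cmod (\<Sum>n. c (n+N) * z^(n+N)) \<le> 1" using tail by linarith
    have SM: "cmod (\<Sum>n. c n * z^n) \<le> M" using nz r1 by (intro bnd) simp
    have A: "(\<Sum>n<N. c n * z^n) = (\<Sum>n. c n * z^n) - (\<Sum>n. c (n+N) * z^(n+N))"
      using split by (simp add: algebra_simps)
    have "cmod (\<Sum>n<N. c n * z^n)
       \<le> cmod (\<Sum>n. c n * z^n) + cmod (\<Sum>n. c (n+N) * z^(n+N))"
      unfolding A by (rule norm_triangle_ineq4)
    then have "cmod (\<Sum>n<N. c n * z^n) \<le> M + 1" using tb SM by linarith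
    moreover have "(\<Sum>n<N. c n * z^n) = (\<Sum>n<N. (c n * complex_of_real r^n) * \<omega>^(k*n))"
      unfolding z_def power_mult_distrib power_mult[symmetric] by (simp add: mult.assoc)
    ultimately show ?thesis by simp
  qed
  have "(\<Sum>k<N. (cmod (\<Sum>n<N. (c n * complex_of_real r^n) * \<omega>^(k*n)))^2) \<le> (\<Sum>k<N. (M+1)^2)"
    using pk by (intro sum_mono power_mono) auto
  also have "\<dots> = real N * (M+1)^2" by simp
  finally have up: "real N * (\<Sum>n<N. (cmod (c n * complex_of_real r^n))^2) \<le> real N * (M+1)^2"
    unfolding \<omega>_def dft_parseval[OF N0'(3)] .
  then have up': "(\<Sum>n<N. (cmod (c n * complex_of_real r^n))^2) \<le> (M+1)^2"
    using N0'(3) by simp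
  have "real m0 * \<delta>^2 / 2 = (\<Sum>n\<in>T. \<delta>^2 / 2)" using T(2) by simp
  also have "\<dots> \<le> (\<Sum>n\<in>T. (cmod (c n * complex_of_real r^n))^2)"
  proof (intro sum_mono)
    fix n assume n: "n \<in> T"
    have "\<delta>^2 \<le> (cmod (c n))^2" using \<delta>le[of n] n T(3) \<delta>pos by (intro power_mono) auto
    moreover have "r^(2*K) \<le> r^(2*n)" using n TK r0 r1 by (intro power_decreasing) auto
    ultimately have "\<delta>^2 * (1/2) \<le> (cmod (c n))^2 * r^(2*n)"
      using rK \<delta>pos by (intro mult_mono) auto
    also have "\<dots> = (cmod (c n * complex_of_real r^n))^2"
      using r0 by (simp add: norm_mult norm_power power_mult_distrib power_mult[symmetric] mult.commute)
    finally show "\<delta>^2 / 2 \<le> (cmod (c n * complex_of_real r^n))^2" by simp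
  qed
  also have "\<dots> \<le> (\<Sum>n<N. (cmod (c n * complex_of_real r^n))^2)"
    using TK N0'(2) by (intro sum_mono2) auto
  finally show False using up' m0 by linarith
qed


definition rc :: "rat fps \<Rightarrow> complex fps" where "rc f = Abs_fps (\<lambda>n. of_rat (f $ n))"

lemma rc_nth [simp]: "rc f $ n = of_rat (f $ n)" by (simp add: rc_def)
lemma rc_0 [simp]: "rc 0 = 0" by (rule fps_ext) simp
lemma rc_1 [simp]: "rc 1 = 1" by (rule fps_ext) simp
lemma rc_add [simp]: "rc (f + g) = rc f + rc g" by (rule fps_ext) (simp add: of_rat_add)
lemma rc_uminus [simp]: "rc (- f) = - rc f" by (rule fps_ext) (simp add: of_rat_minus)
lemma rc_mult [simp]: "rc (f * g) = rc f * rc g"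
  by (rule fps_ext) (simp add: fps_mult_nth of_rat_sum of_rat_mult)
lemma rc_power [simp]: "rc (f ^ n) = rc f ^ n" by (induction n) simp_all
lemma rc_sum: "rc (sum f A) = (\<Sum>x\<in>A. rc (f x))"
  by (induction A rule: infinite_finite_induct) simp_all
lemma rc_prod: "rc (prod f A) = (\<Prod>x\<in>A. rc (f x))"
  by (induction A rule: infinite_finite_induct) simp_all
lemma rc_inj: assumes "rc f = rc g" shows "f = g"
proof (rule fps_ext)
  fix n from assms have "rc f $ n = rc g $ n" by simp
  then show "f $ n = g $ n" by simp
qed
lemma rc_poly: "rc (fps_of_poly p) = fps_of_poly (map_poly of_rat p)"
  by (rule fps_ext) (simp add: coeff_map_poly)

definition phi :: "rat fps \<Rightarrow> complex fls" where "phi f = fps_to_fls (rc f)"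
lemma phi_0 [simp]: "phi 0 = 0" by (simp add: phi_def)
lemma phi_1 [simp]: "phi 1 = 1" by (simp add: phi_def)
lemma phi_add: "phi (f + g) = phi f + phi g" by (simp add: phi_def)
lemma phi_uminus: "phi (- f) = - phi f" by (simp add: phi_def)
lemma phi_mult: "phi (f * g) = phi f * phi g" by (simp add: phi_def fls_times_fps_to_fls)
lemma phi_power: "phi (f ^ n) = phi f ^ n" by (simp add: phi_def fps_to_fls_power)
lemma phi_sum: "phi (sum f A) = (\<Sum>x\<in>A. phi (f x))"
  by (induction A rule: infinite_finite_induct) (simp_all add: phi_add)
lemma phi_prod: "phi (prod f A) = (\<Prod>x\<in>A. phi (f x))"
  by (induction A rule: infinite_finite_induct) (simp_all add: phi_mult)
lemma phi_eq_iff: "phi f = phi g \<longleftrightarrow> f = g"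
  by (auto simp: phi_def dest: rc_inj)

lemma ptf_phi: "poly_to_fls p = phi (fps_of_poly p)"
  by (simp add: poly_to_fls_def phi_def rc_poly)

definition Br :: "(nat \<Rightarrow> nat) \<Rightarrow> rat fps" where "Br b = Abs_fps (\<lambda>n. of_nat (b n))"

lemma gen_phi: "gen_series b = phi (Br b)"
  unfolding gen_series_def phi_def Br_def rc_def by simp

lemma ptf_nonzero: assumes "p \<noteq> 0" shows "poly_to_fls p \<noteq> 0"
proof
  assume "poly_to_fls p = 0"
  then have "phi (fps_of_poly p) = phi (fps_of_poly 0)" by (simp add: ptf_phi)
  then have "fps_of_poly p = fps_of_poly 0" by (simp only: phi_eq_iff)
  with assms show False by (simp only: fps_of_poly_eq_iff)
qed

lemma ptf_mult: "poly_to_fls (p * q) = poly_to_fls p * poly_to_fls q"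
  by (simp add: ptf_phi fps_of_poly_mult phi_mult)
lemma ptf_0 [simp]: "poly_to_fls 0 = 0" by (simp add: ptf_phi)
lemma ptf_1 [simp]: "poly_to_fls 1 = 1" by (simp add: ptf_phi)
lemma ptf_uminus: "poly_to_fls (- p) = - poly_to_fls p"
  by (simp add: ptf_phi fps_of_poly_uminus phi_uminus)

lemma fps_finite_poly:
  fixes F :: "'a::comm_ring_1 fps"
  assumes "finite {n. F $ n \<noteq> 0}"
  shows "\<exists>P. F = fps_of_poly P"
proof -
  define L where "L = Suc (Max (insert 0 {n. F $ n \<noteq> 0}))"
  have L: "F $ n = 0" if "n \<ge> L" for n
  proof (rule ccontr)
    assume "F $ n \<noteq> 0"
    then have "n \<le> Max (insert 0 {n. F $ n \<noteq> 0})" using assms by (intro Max_ge) auto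
    with that show False by (simp add: L_def)
  qed
  define xs where "xs = map (\<lambda>n. F $ n) [0..<L]"
  have "F = fps_of_poly (Poly xs)"
  proof (rule fps_ext)
    fix n show "F $ n = fps_of_poly (Poly xs) $ n"
      by (cases "n < L") (simp_all add: xs_def nth_default_nth nth_default_beyond L)
  qed
  then show ?thesis by blast
qed

lemma periodic_rep:
  assumes "eventually_periodic b"
  shows "\<exists>P d. d \<ge> 1 \<and> fps_of_poly (1 - monom 1 d) * Br b = fps_of_poly P"
proof -
  from assms obtain N d where d: "d \<ge> 1" and per: "\<forall>n\<ge>N. b (n+d) = b n"
    unfolding eventually_periodic_def by blast
  define xs :: "rat list" where
    "xs = map (\<lambda>n. of_nat (b n) - (if n \<ge> d then of_nat (b (n-d)) else 0)) [0..<N+d]"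
  have "fps_of_poly (1 - monom 1 d) * Br b = fps_of_poly (Poly xs)"
  proof (rule fps_ext)
    fix n
    have l: "(fps_of_poly (1 - monom 1 d) * Br b) $ n = of_nat (b n) - (if n \<ge> d then of_nat (b (n-d)) else 0)"
      by (auto simp: fps_of_poly_diff fps_of_poly_monom' left_diff_distrib fps_X_power_mult_nth Br_def)
    show "(fps_of_poly (1 - monom 1 d) * Br b) $ n = fps_of_poly (Poly xs) $ n"
    proof (cases "n < N + d")
      case True then show ?thesis using l by (simp add: xs_def nth_default_nth)
    next
      case False
      then have "n - d \<ge> N" by simp
      then have "b (n - d + d) = b (n - d)" using per by blast
      then have "b n = b (n-d)" using False by simp
      with False show ?thesis using l d by (simp add: xs_def nth_default_beyond)
    qed
  qed
  with d show ?thesis by blast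
qed

lemma one_minus_monom_nz: "d \<ge> 1 \<Longrightarrow> (1 - monom 1 d :: rat poly) \<noteq> 0"
proof
  assume "d \<ge> 1" "(1 - monom 1 d :: rat poly) = 0"
  then have "coeff (1 - monom 1 d :: rat poly) 0 = 0" by simp
  with \<open>d \<ge> 1\<close> show False by (simp add: coeff_monom)
qed

lemma periodic_rep_fls:
  assumes "eventually_periodic b"
  shows "\<exists>P d. d \<ge> 1 \<and> gen_series b = poly_to_fls P / poly_to_fls (1 - monom 1 d)"
proof -
  obtain P d where d: "d \<ge> 1" and eq: "fps_of_poly (1 - monom 1 d) * Br b = fps_of_poly P"
    using periodic_rep[OF assms] by blast
  have "poly_to_fls (1 - monom 1 d) * gen_series b = poly_to_fls P"
    using arg_cong[OF eq, of phi] by (simp add: ptf_phi gen_phi phi_mult)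
  then have "gen_series b = poly_to_fls P / poly_to_fls (1 - monom 1 d)"
    using ptf_nonzero[OF one_minus_monom_nz[OF d]] by (simp add: eq_divide_eq mult.commute)
  with d show ?thesis by blast
qed

lemma recur_periodic:
  fixes b :: "nat \<Rightarrow> nat" and H :: "nat list \<Rightarrow> nat"
  assumes b01: "\<forall>n. b n \<in> {0,1}" and rec: "\<forall>u\<ge>T. b u = H (map b [u-k..<u])"
  shows "eventually_periodic b"
proof -
  define f where "f t = map b [t..<t+k]" for t
  have sub: "f t \<in> {xs. set xs \<subseteq> {0,1} \<and> length xs = k}" for t
  proof -
    have "set (f t) \<subseteq> {0,1}"
    proof
      fix x assume "x \<in> set (f t)"
      then obtain i where "x = b i" by (auto simp: f_def)
      then show "x \<in> {0,1}" by (simp only:) (rule b01[rule_format])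
    qed
    then show ?thesis by (simp add: f_def)
  qed
  have "f ` {T..} \<subseteq> {xs. set xs \<subseteq> {0,1} \<and> length xs = k}" using sub by blast
  then have fin: "finite (f ` {T..})"
    by (rule finite_subset) (rule finite_lists_length_eq, simp)
  have "\<not> inj_on f {T..}"
    using fin finite_imageD infinite_Ici by blast
  then obtain t1 t2 where t: "t1 \<ge> T" "t2 \<ge> T" "t1 \<noteq> t2" "f t1 = f t2"
    unfolding inj_on_def by auto
  define s1 where "s1 = min t1 t2"
  define s2 where "s2 = max t1 t2"
  have s: "s1 \<ge> T" "s2 \<ge> T" "s1 < s2" "f s1 = f s2"
    using t by (auto simp: s1_def s2_def min_def max_def)
  have eq: "b (s1 + j) = b (s2 + j)" for j
  proof (induction j rule: less_induct)
    case (less j)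
    show ?case
    proof (cases "j < k")
      case True
      have "f s1 ! j = f s2 ! j" using s(4) by simp
      then show ?thesis using True by (simp add: f_def)
    next
      case False
      have "b (s1+j) = H (map b [s1+j-k..<s1+j])" using rec s(1) by simp
      also have "map b [s1+j-k..<s1+j] = map b [s2+j-k..<s2+j]"
      proof (rule nth_equalityI)
        show "length (map b [s1+j-k..<s1+j]) = length (map b [s2+j-k..<s2+j])" using False by simp
        fix i assume i: "i < length (map b [s1+j-k..<s1+j])"
        then have ik: "i < k" using False by simp
        have "b (s1 + (j - k + i)) = b (s2 + (j - k + i))" using less.IH[of "j-k+i"] ik False by simp
        then show "map b [s1+j-k..<s1+j] ! i = map b [s2+j-k..<s2+j] ! i"
          using ik False by (simp add: add.assoc)
      qed
      also have "H (map b [s2+j-k..<s2+j]) = b (s2+j)" using rec s(2) by simp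
      finally show ?thesis .
    qed
  qed
  show ?thesis unfolding eventually_periodic_def
  proof (intro exI conjI allI impI)
    show "s2 - s1 \<ge> 1" using s by simp
    fix n assume n: "n \<ge> s1"
    have "b (n + (s2 - s1)) = b (s2 + (n - s1))" using n s by (simp add: algebra_simps)
    also have "\<dots> = b (s1 + (n - s1))" by (rule eq[symmetric])
    also have "\<dots> = b n" using n by simp
    finally show "b (n + (s2 - s1)) = b n" .
  qed
qed

lemma QX_periodic:
  assumes b01: "\<forall>n. b n \<in> {0,1}" and G: "gen_series b \<in> QX"
  shows "eventually_periodic b"
proof -
  obtain p q where q: "q \<noteq> 0" and Gpq: "gen_series b = poly_to_fls p / poly_to_fls q"
    using G by (auto simp: QX_def)
  have "gen_series b * poly_to_fls q = poly_to_fls p" using Gpq ptf_nonzero[OF q] by simp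
  then have "phi (fps_of_poly q * Br b) = phi (fps_of_poly p)"
    by (simp add: gen_phi ptf_phi phi_mult mult.commute)
  then have eq: "fps_of_poly q * Br b = fps_of_poly p" by (simp only: phi_eq_iff)
  define e where "e = degree q"
  have qe: "coeff q e \<noteq> 0" using q by (simp add: e_def)
  define m where "m = (LEAST j. coeff q j \<noteq> 0)"
  have qm: "coeff q m \<noteq> 0" unfolding m_def using qe by (rule LeastI)
  have qlt: "coeff q j = 0" if "j < m" for j
    using that not_less_Least unfolding m_def by blast
  have me: "m \<le> e" unfolding m_def using qe by (rule Least_le)
  define k where "k = e - m"
  define T where "T = e + degree p + 1"
  have rec0: "(\<Sum>t\<in>{0..k}. coeff q (t+m) * of_nat (b (u - t))) = (0::rat)" if u: "u \<ge> T" for u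
  proof -
    have "coeff p (u+m) = 0" using u by (intro coeff_eq_0) (simp add: T_def)
    then have "(fps_of_poly q * Br b) $ (u+m) = 0" using eq by simp
    then have "(\<Sum>j=0..u+m. coeff q j * of_nat (b (u+m-j))) = (0::rat)"
      by (simp add: fps_mult_nth Br_def)
    also have "(\<Sum>j=0..u+m. coeff q j * of_nat (b (u+m-j))) = (\<Sum>j=0+m..k+m. coeff q j * of_nat (b (u+m-j)))"
    proof (rule sum.mono_neutral_right)
      show "{0+m..k+m} \<subseteq> {0..u+m}" using u me by (auto simp: k_def T_def)
      show "\<forall>j\<in>{0..u + m} - {0+m..k+m}. coeff q j * of_nat (b (u + m - j)) = 0"
      proof
        fix j assume "j \<in> {0..u + m} - {0+m..k+m}"
        then have "j < m \<or> j > e" using me by (auto simp: k_def)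
        then show "coeff q j * of_nat (b (u + m - j)) = 0"
          using qlt coeff_eq_0[of q j] by (auto simp: e_def)
      qed
    qed simp
    also have "\<dots> = (\<Sum>t=0..k. coeff q (t+m) * of_nat (b (u+m-(t+m))))"
      by (rule sum.shift_bounds_cl_nat_ivl)
    also have "\<dots> = (\<Sum>t=0..k. coeff q (t+m) * of_nat (b (u-t)))" by simp
    finally show ?thesis .
  qed
  define H where "H xs = (if - (\<Sum>t\<in>{Suc 0..k}. coeff q (t+m) * of_nat (xs ! (k-t))) / coeff q m = (1::rat)
     then 1 else (0::nat))" for xs
  have rec: "\<forall>u\<ge>T. b u = H (map b [u-k..<u])"
  proof (intro allI impI)
    fix u assume u: "u \<ge> T"
    then have uk: "u \<ge> k" by (simp add: T_def k_def)
    have "(\<Sum>t\<in>{0..k}. coeff q (t+m) * of_nat (b (u - t)))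
        = coeff q m * of_nat (b u) + (\<Sum>t\<in>{Suc 0..k}. coeff q (t+m) * of_nat (b (u - t)))"
      by (subst sum.atLeast_Suc_atMost) simp_all
    also have "(\<Sum>t\<in>{Suc 0..k}. coeff q (t+m) * of_nat (b (u - t)))
        = (\<Sum>t\<in>{Suc 0..k}. coeff q (t+m) * of_nat (map b [u-k..<u] ! (k-t)))"
    proof (intro sum.cong refl)
      fix t assume t: "t \<in> {Suc 0..k}"
      then have "map b [u-k..<u] ! (k-t) = b (u - k + (k - t))" using uk by simp
      also have "u - k + (k - t) = u - t" using t uk by simp
      finally show "coeff q (t+m) * (of_nat (b (u - t)) :: rat) = coeff q (t+m) * of_nat (map b [u-k..<u] ! (k-t))"
        by simp
    qed
    finally have "coeff q m * of_nat (b u) + (\<Sum>t\<in>{Suc 0..k}. coeff q (t+m) * of_nat (map b [u-k..<u] ! (k-t))) = (0::rat)"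
      using rec0[OF u] by simp
    then have bu: "of_nat (b u) = - (\<Sum>t\<in>{Suc 0..k}. coeff q (t+m) * of_nat (map b [u-k..<u] ! (k-t))) / coeff q m"
      using qm by (simp add: field_simps add_eq_0_iff)
    show "b u = H (map b [u-k..<u])"
      using b01[rule_format, of u] unfolding H_def bu[symmetric] by auto
  qed
  show ?thesis by (rule recur_periodic[OF b01 rec])
qed

lemma QX_alg:
  assumes "gen_series b \<in> QX" shows "algebraic_over_QX (gen_series b)"
proof -
  obtain p q where q: "q \<noteq> 0" and G: "gen_series b = poly_to_fls p / poly_to_fls q"
    using assms by (auto simp: QX_def)
  define c :: "nat \<Rightarrow> complex fls" where "c i = (if i = 0 then - gen_series b else 1)" for i
  have c0: "c 0 \<in> QX"
  proof -
    have "c 0 = poly_to_fls (- p) / poly_to_fls q" by (simp add: c_def G ptf_uminus)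
    then show ?thesis using q unfolding QX_def by blast
  qed
  have c1: "c i \<in> QX" if "i \<noteq> 0" for i
  proof -
    have "c i = poly_to_fls 1 / poly_to_fls 1" using that by (simp add: c_def)
    then show ?thesis unfolding QX_def by fastforce
  qed
  show ?thesis unfolding algebraic_over_QX_def
  proof (rule exI[of _ 1], rule exI[of _ c], intro conjI)
    show "\<forall>i\<le>1. c i \<in> QX" using c0 c1 by (metis)
    show "\<exists>i\<le>1. c i \<noteq> 0" by (intro exI[of _ 1]) (simp add: c_def)
    show "(\<Sum>i\<le>1. c i * gen_series b ^ i) = 0" by (simp add: c_def)
  qed
qed

lemma cauchy_bound:
  fixes w :: "nat \<Rightarrow> complex" and y :: complex
  assumes d: "d \<ge> 1" and eq: "(\<Sum>i\<le>d. w i * y^i) = 0"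
  shows "norm (w d * y) \<le> (\<Sum>i\<le>d. norm (w i))"
proof (cases "norm y \<le> 1")
  case True
  have "norm (w d * y) \<le> norm (w d)" using True by (simp add: norm_mult mult_left_le)
  also have "\<dots> \<le> (\<Sum>i\<le>d. norm (w i))" by (rule member_le_sum) auto
  finally show ?thesis .
next
  case False
  obtain e where de: "d = Suc e" using d by (cases d) auto
  have "(\<Sum>i\<le>d. w i * y^i) = w d * y^d + (\<Sum>i<d. w i * y^i)"
    unfolding de by (simp add: lessThan_Suc_atMost[symmetric] sum.lessThan_Suc)
  with eq have wd: "w d * y^d = - (\<Sum>i<d. w i * y^i)" by (simp add: add_eq_0_iff)
  have "norm (w d) * norm y ^ e * norm y = norm (w d * y^d)"
    by (simp add: de norm_mult norm_power mult_ac)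
  also have "\<dots> = norm (\<Sum>i<d. w i * y^i)" using wd by simp
  also have "\<dots> \<le> (\<Sum>i<d. norm (w i * y^i))" by (rule norm_sum)
  also have "\<dots> \<le> (\<Sum>i<d. norm (w i) * norm y ^ e)"
  proof (intro sum_mono)
    fix i assume "i \<in> {..<d}"
    then have "i \<le> e" by (simp add: de)
    then have "norm y ^ i \<le> norm y ^ e" using False by (intro power_increasing) auto
    then show "norm (w i * y^i) \<le> norm (w i) * norm y ^ e"
      by (simp add: norm_mult norm_power mult_left_mono)
  qed
  also have "\<dots> = (\<Sum>i<d. norm (w i)) * norm y ^ e" by (simp add: sum_distrib_right)
  finally have "(norm (w d) * norm y) * norm y ^ e \<le> (\<Sum>i<d. norm (w i)) * norm y ^ e"
    by (simp add: mult_ac)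
  moreover have "norm y ^ e > 0" by (rule zero_less_power) (use False in linarith)
  ultimately have "norm (w d) * norm y \<le> (\<Sum>i<d. norm (w i))" by (rule mult_right_le_imp_le)
  also have "\<dots> \<le> (\<Sum>i\<le>d. norm (w i))" by (intro sum_mono2) auto
  finally show ?thesis by (simp add: norm_mult)
qed

lemma poly_bound:
  fixes p :: "complex poly"
  assumes "norm z \<le> 1"
  shows "norm (poly p z) \<le> (\<Sum>i\<le>degree p. norm (coeff p i))"
proof -
  have "norm (poly p z) \<le> (\<Sum>i\<le>degree p. norm (coeff p i * z^i))"
    unfolding poly_altdef by (rule norm_sum)
  also have "\<dots> \<le> (\<Sum>i\<le>degree p. norm (coeff p i))"
  proof (intro sum_mono)
    fix i
    have "norm z ^ i \<le> 1" using assms by (simp add: power_le_one)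
    then show "norm (coeff p i * z^i) \<le> norm (coeff p i)"
      by (simp add: norm_mult norm_power mult_left_le)
  qed
  finally show ?thesis .
qed

lemma eval_fps_sum:
  fixes F :: "'b \<Rightarrow> complex fps"
  assumes "finite A" "\<forall>i\<in>A. fps_conv_radius (F i) \<ge> R" "ereal (norm z) < R"
  shows "fps_conv_radius (\<Sum>i\<in>A. F i) \<ge> R \<and> eval_fps (\<Sum>i\<in>A. F i) z = (\<Sum>i\<in>A. eval_fps (F i) z)"
  using assms
proof (induction A rule: finite_induct)
  case empty
  then show ?case by simp
next
  case (insert x A)
  then have IH: "fps_conv_radius (\<Sum>i\<in>A. F i) \<ge> R" "eval_fps (\<Sum>i\<in>A. F i) z = (\<Sum>i\<in>A. eval_fps (F i) z)"
    by auto
  have Fx: "fps_conv_radius (F x) \<ge> R" using insert by auto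
  have "R \<le> min (fps_conv_radius (F x)) (fps_conv_radius (\<Sum>i\<in>A. F i))" using IH Fx by simp
  also have "\<dots> \<le> fps_conv_radius (F x + (\<Sum>i\<in>A. F i))" by (rule fps_conv_radius_add)
  finally have r: "R \<le> fps_conv_radius (F x + (\<Sum>i\<in>A. F i))" .
  have "eval_fps (F x + (\<Sum>i\<in>A. F i)) z = eval_fps (F x) z + eval_fps (\<Sum>i\<in>A. F i) z"
    using Fx IH insert.prems(2) by (intro eval_fps_add) (auto intro: less_le_trans)
  with r IH insert.hyps show ?case by simp
qed

lemma alg_QX:
  assumes b01: "\<forall>n. b n \<in> {0,1}" and alg: "algebraic_over_QX (gen_series b)"
  shows "gen_series b \<in> QX"
proof -
  obtain n c where cQ: "\<forall>i\<le>n. c i \<in> QX" and cnz: "\<exists>i\<le>n. c i \<noteq> 0"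
      and eq0: "(\<Sum>i\<le>n. c i * gen_series b ^ i) = 0"
    using alg unfolding algebraic_over_QX_def by blast
  have "\<forall>i\<in>{..n}. \<exists>pq. snd pq \<noteq> 0 \<and> c i = poly_to_fls (fst pq) / poly_to_fls (snd pq)"
    using cQ unfolding QX_def by fastforce
  from bchoice[OF this] obtain pq where
    pq: "\<forall>i\<in>{..n}. snd (pq i) \<noteq> 0 \<and> c i = poly_to_fls (fst (pq i)) / poly_to_fls (snd (pq i))"
    by blast
  define p where "p i = fst (pq i)" for i
  define q where "q i = snd (pq i)" for i
  define D where "D = (\<Prod>i\<le>n. q i)"
  define a where "a i = p i * (\<Prod>j\<in>{..n}-{i}. q j)" for i
  have qnz: "q i \<noteq> 0" if "i \<le> n" for i using pq that by (auto simp: q_def)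
  have cq: "c i * poly_to_fls (q i) = poly_to_fls (p i)" if "i \<le> n" for i
    using pq that ptf_nonzero[OF qnz[OF that]] by (auto simp: p_def q_def)
  have ca: "poly_to_fls (a i) = c i * poly_to_fls D" if i: "i \<le> n" for i
  proof -
    have "D = q i * (\<Prod>j\<in>{..n}-{i}. q j)" unfolding D_def using i by (subst prod.remove[of _ i]) auto
    then have "c i * poly_to_fls D = (c i * poly_to_fls (q i)) * poly_to_fls (\<Prod>j\<in>{..n}-{i}. q j)"
      by (simp add: ptf_mult mult.assoc)
    also have "\<dots> = poly_to_fls (a i)" using cq[OF i] by (simp add: a_def ptf_mult)
    finally show ?thesis by simp
  qed
  have Dnz: "D \<noteq> 0" unfolding D_def using qnz by (simp add: prod_zero_iff)
  let ?G = "gen_series b"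
  have "(\<Sum>i\<le>n. poly_to_fls (a i) * ?G ^ i) = (\<Sum>i\<le>n. c i * ?G ^ i) * poly_to_fls D"
    unfolding sum_distrib_right by (intro sum.cong refl) (simp add: ca mult_ac)
  also have "\<dots> = 0" using eq0 by simp
  finally have eqa: "(\<Sum>i\<le>n. poly_to_fls (a i) * ?G ^ i) = 0" .
  have "phi (\<Sum>i\<le>n. fps_of_poly (a i) * Br b ^ i) = (\<Sum>i\<le>n. poly_to_fls (a i) * ?G ^ i)"
    by (simp add: phi_sum phi_mult phi_power ptf_phi gen_phi)
  with eqa have eqr: "(\<Sum>i\<le>n. fps_of_poly (a i) * Br b ^ i) = 0"
    by (metis phi_0 phi_eq_iff)
  obtain i0 where i0: "i0 \<le> n" "c i0 \<noteq> 0" using cnz by blast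
  have ai0: "a i0 \<noteq> 0"
  proof
    assume "a i0 = 0"
    then have "c i0 * poly_to_fls D = 0" using ca[OF i0(1)] by simp
    with i0(2) ptf_nonzero[OF Dnz] show False by simp
  qed
  define d where "d = Max {i\<in>{..n}. a i \<noteq> 0}"
  have dset: "d \<in> {i\<in>{..n}. a i \<noteq> 0}" unfolding d_def using i0 ai0 by (intro Max_in) auto
  have dmax: "i \<le> d" if "i \<le> n" "a i \<noteq> 0" for i unfolding d_def using that by (intro Max_ge) auto
  have ad: "a d \<noteq> 0" "d \<le> n" using dset by auto
  have "(\<Sum>i\<le>n. fps_of_poly (a i) * Br b ^ i) = (\<Sum>i\<le>d. fps_of_poly (a i) * Br b ^ i)"
  proof (rule sum.mono_neutral_right)
    show "\<forall>i\<in>{..n} - {..d}. fps_of_poly (a i) * Br b ^ i = 0"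
      using dmax by (auto simp: not_le[symmetric])
  qed (use ad in auto)
  with eqr have eqd: "(\<Sum>i\<le>d. fps_of_poly (a i) * Br b ^ i) = 0" by simp
  have d1: "d \<ge> 1"
  proof (rule ccontr)
    assume "\<not> d \<ge> 1" then have d0: "d = 0" by simp
    with eqd have "fps_of_poly (a 0) = fps_of_poly 0" by simp
    then have "a 0 = 0" by (simp only: fps_of_poly_eq_iff)
    with d0 ad show False by simp
  qed
  define ac where "ac i = map_poly (of_rat :: rat \<Rightarrow> complex) (a i)" for i
  define Bc where "Bc = rc (Br b)"
  have Bc_nth: "Bc $ m = of_nat (b m)" for m by (simp add: Bc_def Br_def)
  have eqc: "(\<Sum>i\<le>d. fps_of_poly (ac i) * Bc ^ i) = 0"
    using arg_cong[OF eqd, of rc] by (simp add: rc_sum rc_poly ac_def Bc_def)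
  have radB: "fps_conv_radius Bc \<ge> 1"
    unfolding fps_conv_radius_def
  proof (rule conv_radius_geI_ex')
    fix r :: real assume r: "0 < r" "ereal r < 1"
    have sg: "summable (\<lambda>m. r^m)" using r by (intro summable_geometric) simp
    show "summable (\<lambda>m. Bc $ m * of_real r ^ m)"
    proof (rule summable_comparison_test[OF _ sg], intro exI allI impI)
      fix m :: nat
      have "norm (Bc $ m) \<le> 1" using b01[rule_format, of m] by (auto simp: Bc_nth)
      then show "norm (Bc $ m * of_real r ^ m) \<le> r ^ m"
        using r by (simp add: norm_mult norm_power mult_left_le_one_le)
    qed
  qed
  have zR: "ereal (norm z) < fps_conv_radius Bc" if "norm z < 1" for z :: complex
    using that radB by (metis ereal_less(3) less_le_trans one_ereal_def)
  have radBi: "fps_conv_radius (Bc ^ i) \<ge> fps_conv_radius Bc" for i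
    by (rule fps_conv_radius_power)
  have radi: "fps_conv_radius (fps_of_poly (ac i) * Bc ^ i) \<ge> fps_conv_radius Bc" for i
  proof -
    have "fps_conv_radius Bc \<le> min (fps_conv_radius (fps_of_poly (ac i))) (fps_conv_radius (Bc ^ i))"
      using radBi[of i] by simp
    also have "\<dots> \<le> fps_conv_radius (fps_of_poly (ac i) * Bc ^ i)" by (rule fps_conv_radius_mult)
    finally show ?thesis .
  qed
  have evalz: "(\<Sum>i\<le>d. poly (ac i) z * eval_fps Bc z ^ i) = 0" if z: "norm z < 1" for z
  proof -
    have "0 = eval_fps (\<Sum>i\<le>d. fps_of_poly (ac i) * Bc ^ i) z" using eqc by simp
    also have "\<dots> = (\<Sum>i\<le>d. eval_fps (fps_of_poly (ac i) * Bc ^ i) z)"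
      using eval_fps_sum[where A="{..d}" and F="\<lambda>i. fps_of_poly (ac i) * Bc ^ i" and R="fps_conv_radius Bc" and z=z] radi zR[OF z]
      by auto
    also have "\<dots> = (\<Sum>i\<le>d. poly (ac i) z * eval_fps Bc z ^ i)"
    proof (intro sum.cong refl)
      fix i
      have "eval_fps (fps_of_poly (ac i) * Bc ^ i) z = eval_fps (fps_of_poly (ac i)) z * eval_fps (Bc ^ i) z"
        using zR[OF z] radBi[of i] by (intro eval_fps_mult) (auto intro: less_le_trans)
      also have "\<dots> = poly (ac i) z * eval_fps Bc z ^ i" using zR[OF z] by (simp add: eval_fps_power)
      finally show "eval_fps (fps_of_poly (ac i) * Bc ^ i) z = poly (ac i) z * eval_fps Bc z ^ i" .
    qed
    finally show ?thesis by simp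
  qed
  define Mb where "Mb = (\<Sum>i\<le>d. \<Sum>j\<le>degree (ac i). norm (coeff (ac i) j))"
  define g where "g = fps_of_poly (ac d) * Bc"
  have gbound: "norm (\<Sum>m. g $ m * z ^ m) \<le> Mb" if z: "norm z < 1" for z
  proof -
    have "(\<Sum>m. g $ m * z^m) = eval_fps g z" by (simp add: eval_fps_def)
    also have "\<dots> = poly (ac d) z * eval_fps Bc z" unfolding g_def
      using zR[OF z] by (subst eval_fps_mult) auto
    finally have "norm (\<Sum>m. g $ m * z^m) = norm (poly (ac d) z * eval_fps Bc z)" by simp
    also have "\<dots> \<le> (\<Sum>i\<le>d. norm (poly (ac i) z))"
      by (rule cauchy_bound[OF d1 evalz[OF z]])
    also have "\<dots> \<le> Mb" unfolding Mb_def using z by (intro sum_mono poly_bound) simp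
    finally show ?thesis .
  qed
  have g_nth: "g $ m = (\<Sum>j=0..m. coeff (ac d) j * of_nat (b (m-j)))" for m
    by (simp add: g_def fps_mult_nth Bc_nth)
  have grange: "range (\<lambda>m. g $ m) \<subseteq> (\<lambda>S. \<Sum>j\<in>S. coeff (ac d) j) ` Pow {..degree (ac d)}"
  proof
    fix x assume "x \<in> range (\<lambda>m. g $ m)"
    then obtain m where x: "x = g $ m" by auto
    define S where "S = {j\<in>{0..m}. j \<le> degree (ac d) \<and> b (m-j) = 1}"
    have trm: "coeff (ac d) j * of_nat (b (m-j)) = (if j \<le> degree (ac d) \<and> b (m-j) = 1 then coeff (ac d) j else 0)" for j
    proof (cases "b (m-j) = 1")
      case True then show ?thesis by (auto simp: coeff_eq_0)
    next
      case False then have "b (m-j) = 0" using b01[rule_format, of "m-j"] by auto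
      then show ?thesis by simp
    qed
    have "g $ m = (\<Sum>j\<in>{0..m}. if j \<le> degree (ac d) \<and> b (m-j) = 1 then coeff (ac d) j else 0)"
      unfolding g_nth by (intro sum.cong refl) (rule trm)
    also have "\<dots> = (\<Sum>j\<in>S. coeff (ac d) j)" unfolding S_def by (rule sum.inter_filter[symmetric]) simp
    finally show "x \<in> (\<lambda>S. \<Sum>j\<in>S. coeff (ac d) j) ` Pow {..degree (ac d)}"
      using x by (auto simp: S_def)
  qed
  have "finite (range (\<lambda>m. g $ m))" by (rule finite_subset[OF grange]) simp
  then have fin: "finite {m. g $ m \<noteq> 0}" using bounded_powser_finite[of "\<lambda>m. g $ m" Mb] gbound by blast
  define gr where "gr = fps_of_poly (a d) * Br b"
  have g_gr: "g = rc gr" by (simp add: g_def gr_def Bc_def rc_poly ac_def)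
  have "finite {m. gr $ m \<noteq> 0}" using fin by (simp add: g_gr)
  then obtain P where P: "gr = fps_of_poly P" using fps_finite_poly by blast
  have "poly_to_fls (a d) * gen_series b = poly_to_fls P"
    using arg_cong[OF P, of phi] by (simp add: gr_def ptf_phi gen_phi phi_mult)
  then have "gen_series b = poly_to_fls P / poly_to_fls (a d)"
    using ptf_nonzero[OF ad(1)] by (simp add: eq_divide_eq mult.commute)
  then show ?thesis using ad(1) unfolding QX_def by blast
qed

theorem corollary2p5:
  fixes b :: "nat \<Rightarrow> nat"
  assumes "\<forall>n. b n \<in> {0, 1}"
  shows "(eventually_periodic b \<longleftrightarrow> gen_series b \<in> QX)
       \<and> (eventually_periodic b \<longrightarrow>
            (\<exists>(P::rat poly) (d::nat). d \<ge> 1 \<and>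
               gen_series b = poly_to_fls P / poly_to_fls (1 - monom 1 d)))
       \<and> (\<not> eventually_periodic b \<longleftrightarrow> transcendental_over_QX (gen_series b))"
proof -
  have per_QX: "gen_series b \<in> QX" if ep: "eventually_periodic b"
  proof -
    obtain P d where "d \<ge> 1" "gen_series b = poly_to_fls P / poly_to_fls (1 - monom 1 d)"
      using periodic_rep_fls[OF ep] by blast
    then show ?thesis using one_minus_monom_nz unfolding QX_def by blast
  qed
  have QX_per: "gen_series b \<in> QX \<Longrightarrow> eventually_periodic b" using QX_periodic[OF assms] by blast
  have "algebraic_over_QX (gen_series b) \<longleftrightarrow> eventually_periodic b"
    using QX_alg alg_QX[OF assms] per_QX QX_per by blast
  then show ?thesis using per_QX QX_per periodic_rep_fls
    unfolding transcendental_over_QX_def by blast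
qed

end
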